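(* For every virtual knot $K$ there exists a positive integer $n$ such that $K$ can be represented on a $1\times n$ virtual rectangular mosaic (a row mosaic).
   Context: Mosaic tiles are the eleven standard unit-square tiles $T_0,\dots,T_{10}$: $T_0$ is blank; $T_1,\dots,T_4$ each contain a single arc joining the midpoints of two adjacent sides; $T_5$ (horizontal) and $T_6$ (vertical) each contain a single straight segment joining midpoints of opposite sides; $T_7,T_8$ each contain two disjoint arcs, each joining midpoints of two adjacent sides; $T_9,T_{10}$ are the two crossing tiles, containing a horizontal and a vertical segment crossing at the center, with the vertical strand over in one and the horizontal strand over in the other. A virtual rectangular mosaic is an $m\times n$ array of such tiles together with a pairing (with orientation) of the $2(m+n)$ boundary unit edges of the array such that the quotient ("closure") is a closed orientable surface $\Sigma_D$ carrying a knot or link diagram $D$; this represents a virtual knot/link (a knot diagram on a closed orientable surface up to stable equivalence; equivalently, a virtual knot diagram up to generalized Reidemeister moves, with interlocking boundary edge pairs giving virtual crossings). A row mosaic is a $1\times n$ virtual rectangular mosaic. *)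

theory Defs
  imports Main
begin

section \<open>Virtual knots as signed Gauss codes modulo Reidemeister moves\<close>

text \<open>A symbol of a signed Gauss code: (crossing label, passes over?, positive crossing?).
  A (one-component) virtual knot diagram is a cyclic word of such symbols in which every
  label occurs exactly twice, once over and once under, with the same sign
  (Goussarov-Polyak-Viro Gauss diagrams). Cyclicity is handled by rotation moves.\<close>

type_synonym gsym = "nat \<times> bool \<times> bool"

definition labels :: "gsym list \<Rightarrow> nat set" where
  "labels w = fst ` set w"

definition valid_gauss :: "gsym list \<Rightarrow> bool" where
  "valid_gauss w \<longleftrightarrow> (\<forall>c \<in> labels w. \<exists>s.
      filter (\<lambda>x. fst x = c) w = [(c, True, s), (c, False, s)] \<or>
      filter (\<lambda>x. fst x = c) w = [(c, False, s), (c, True, s)])"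

text \<open>Top strand T crosses middle strand M at x and bottom
  strand B at y; M crosses B at z. The three adjacent segments of the code
  along T, M, B; the realizable configurations are exactly those with orders determined by
  the signs and a parameter mu; the move flips mu (reverses all three segments).\<close>

definition tri_T :: "bool \<Rightarrow> nat \<Rightarrow> nat \<Rightarrow> nat \<Rightarrow> bool \<Rightarrow> bool \<Rightarrow> bool \<Rightarrow> gsym list" where
  "tri_T mu x y z sx sy sz =
     (if mu = sz then [(x, True, sx), (y, True, sy)] else [(y, True, sy), (x, True, sx)])"

definition tri_M :: "bool \<Rightarrow> nat \<Rightarrow> nat \<Rightarrow> nat \<Rightarrow> bool \<Rightarrow> bool \<Rightarrow> bool \<Rightarrow> gsym list" where
  "tri_M mu x y z sx sy sz =
     (if mu = sy then [(x, False, sx), (z, True, sz)] else [(z, True, sz), (x, False, sx)])"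

definition tri_B :: "bool \<Rightarrow> nat \<Rightarrow> nat \<Rightarrow> nat \<Rightarrow> bool \<Rightarrow> bool \<Rightarrow> bool \<Rightarrow> gsym list" where
  "tri_B mu x y z sx sy sz =
     (if mu = sx then [(y, False, sy), (z, False, sz)] else [(z, False, sz), (y, False, sy)])"

inductive gmove :: "gsym list \<Rightarrow> gsym list \<Rightarrow> bool" where
  rot: "gmove w (rotate1 w)"
| rename: "inj_on f (labels w) \<Longrightarrow> gmove w (map (\<lambda>(c, ov, s). (f c, ov, s)) w)"
| R1: "gmove (u @ v) (u @ [(c, ov, s), (c, \<not> ov, s)] @ v)"
| R2: "a \<noteq> b \<Longrightarrow> X \<in> {[(a, False, s), (b, False, \<not> s)], [(b, False, \<not> s), (a, False, s)]} \<Longrightarrow>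
       gmove (u1 @ u2 @ u3) (u1 @ [(a, True, s), (b, True, \<not> s)] @ u2 @ X @ u3)"
| R3a: "distinct [x, y, z] \<Longrightarrow>
       gmove (u1 @ tri_T mu x y z sx sy sz @ u2 @ tri_M mu x y z sx sy sz @ u3 @ tri_B mu x y z sx sy sz @ u4)
             (u1 @ tri_T (\<not> mu) x y z sx sy sz @ u2 @ tri_M (\<not> mu) x y z sx sy sz @ u3 @ tri_B (\<not> mu) x y z sx sy sz @ u4)"
| R3b: "distinct [x, y, z] \<Longrightarrow>
       gmove (u1 @ tri_T mu x y z sx sy sz @ u2 @ tri_B mu x y z sx sy sz @ u3 @ tri_M mu x y z sx sy sz @ u4)
             (u1 @ tri_T (\<not> mu) x y z sx sy sz @ u2 @ tri_B (\<not> mu) x y z sx sy sz @ u3 @ tri_M (\<not> mu) x y z sx sy sz @ u4)"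

definition gstep :: "gsym list \<Rightarrow> gsym list \<Rightarrow> bool" where
  "gstep w w' \<longleftrightarrow> valid_gauss w \<and> valid_gauss w' \<and> gmove w w'"

definition gauss_equiv :: "gsym list \<Rightarrow> gsym list \<Rightarrow> bool" where
  "gauss_equiv = equivclp gstep"

datatype side = Nth | Est | Sth | Wst

datatype tile = T0 | T1 | T2 | T3 | T4 | T5 | T6 | T7 | T8 | T9 | T10

text \<open>Strands of a tile, each given by the two sides whose midpoints it joins.
  T9: vertical strand over; T10: horizontal strand over.\<close>
fun tile_strands :: "tile \<Rightarrow> side set set" where
  "tile_strands T0 = {}"
| "tile_strands T1 = {{Wst, Sth}}"
| "tile_strands T2 = {{Sth, Est}}"
| "tile_strands T3 = {{Est, Nth}}"
| "tile_strands T4 = {{Nth, Wst}}"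
| "tile_strands T5 = {{Wst, Est}}"
| "tile_strands T6 = {{Nth, Sth}}"
| "tile_strands T7 = {{Wst, Nth}, {Sth, Est}}"
| "tile_strands T8 = {{Wst, Sth}, {Nth, Est}}"
| "tile_strands T9 = {{Wst, Est}, {Nth, Sth}}"
| "tile_strands T10 = {{Wst, Est}, {Nth, Sth}}"

text \<open>Tiles are indexed (i,j), row i < m (top to bottom), column j < n. A port (i,j,s) is
  the side s of tile (i,j). Boundary unit edges are the ports facing outwards.\<close>

type_synonym port = "nat \<times> nat \<times> side"

definition bedges :: "nat \<Rightarrow> nat \<Rightarrow> port set" where
  "bedges m n = {(0, j, Nth) | j. j < n} \<union> {(m - 1, j, Sth) | j. j < n}
              \<union> {(i, 0, Wst) | i. i < m} \<union> {(i, n - 1, Est) | i. i < m}"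

text \<open>A virtual rectangular mosaic: an m x n array of tiles with a pairing (fixed-point free
  involution) of the boundary edges; each pair is glued orientation-reversingly with respect
  to the boundary orientation, which is exactly the condition for the closure to be orientable.\<close>
definition virtual_mosaic :: "nat \<Rightarrow> nat \<Rightarrow> (nat \<Rightarrow> nat \<Rightarrow> tile) \<Rightarrow> (port \<Rightarrow> port) \<Rightarrow> bool" where
  "virtual_mosaic m n g P \<longleftrightarrow> 0 < m \<and> 0 < n \<and>
     (\<forall>e \<in> bedges m n. P e \<in> bedges m n \<and> P e \<noteq> e \<and> P (P e) = e)"

fun link :: "nat \<Rightarrow> nat \<Rightarrow> (port \<Rightarrow> port) \<Rightarrow> port \<Rightarrow> port" where
  "link m n P (i, j, s) =
     (if (i, j, s) \<in> bedges m n then P (i, j, s)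
      else (case s of Nth \<Rightarrow> (i - 1, j, Sth) | Sth \<Rightarrow> (i + 1, j, Nth)
                    | Wst \<Rightarrow> (i, j - 1, Est) | Est \<Rightarrow> (i, j + 1, Wst)))"

text \<open>A passage (i,j,a,b): traversal of a strand of tile (i,j) entering at side a, leaving at b.\<close>
type_synonym passage = "nat \<times> nat \<times> side \<times> side"

fun p_tile :: "passage \<Rightarrow> nat \<times> nat" where "p_tile (i, j, a, b) = (i, j)"
fun p_entry :: "passage \<Rightarrow> port" where "p_entry (i, j, a, b) = (i, j, a)"
fun p_exit :: "passage \<Rightarrow> port" where "p_exit (i, j, a, b) = (i, j, b)"
fun p_strand :: "passage \<Rightarrow> nat \<times> nat \<times> side set" where "p_strand (i, j, a, b) = (i, j, {a, b})"
fun p_out :: "passage \<Rightarrow> side" where "p_out (i, j, a, b) = b"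

definition strands :: "nat \<Rightarrow> nat \<Rightarrow> (nat \<Rightarrow> nat \<Rightarrow> tile) \<Rightarrow> (nat \<times> nat \<times> side set) set" where
  "strands m n g = {(i, j, st) | i j st. i < m \<and> j < n \<and> st \<in> tile_strands (g i j)}"

text \<open>The diagram D on the closure is a knot, traversed (with an orientation) by the cyclic
  list of passages ps: consecutive passages are joined on the closure, and every strand of
  every tile is traversed exactly once. (This also forces all strand endpoints to be matched.)\<close>
definition knot_traversal ::
  "nat \<Rightarrow> nat \<Rightarrow> (nat \<Rightarrow> nat \<Rightarrow> tile) \<Rightarrow> (port \<Rightarrow> port) \<Rightarrow> passage list \<Rightarrow> bool" where
  "knot_traversal m n g P ps \<longleftrightarrow> ps \<noteq> [] \<and>
     distinct (map p_strand ps) \<and> set (map p_strand ps) = strands m n g \<and>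
     (\<forall>k < length ps. link m n P (p_exit (ps ! k)) = p_entry (ps ! ((k + 1) mod length ps)))"

definition is_crossing :: "tile \<Rightarrow> bool" where
  "is_crossing t \<longleftrightarrow> t = T9 \<or> t = T10"

definition horizontal :: "passage \<Rightarrow> bool" where
  "horizontal p \<longleftrightarrow> p_out p \<in> {Wst, Est}"

text \<open>Direction components at crossing tile (i,j) (x to the right, y upward = north).\<close>
definition hdir :: "passage list \<Rightarrow> nat \<times> nat \<Rightarrow> int" where
  "hdir ps c = (if p_out (the (find (\<lambda>q. p_tile q = c \<and> horizontal q) ps)) = Est then 1 else -1)"

definition vdir :: "passage list \<Rightarrow> nat \<times> nat \<Rightarrow> int" where
  "vdir ps c = (if p_out (the (find (\<lambda>q. p_tile q = c \<and> \<not> horizontal q) ps)) = Nth then 1 else -1)"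

text \<open>Sign of a crossing: sign of det(over direction, under direction), the closure being
  oriented by the orientation of the plane containing the tiles.\<close>
definition crossing_positive :: "(nat \<Rightarrow> nat \<Rightarrow> tile) \<Rightarrow> passage list \<Rightarrow> nat \<times> nat \<Rightarrow> bool" where
  "crossing_positive g ps c \<longleftrightarrow>
     (if g (fst c) (snd c) = T10 then hdir ps c * vdir ps c > 0 else - (hdir ps c * vdir ps c) > 0)"

definition passes_over :: "(nat \<Rightarrow> nat \<Rightarrow> tile) \<Rightarrow> passage \<Rightarrow> bool" where
  "passes_over g p \<longleftrightarrow>
     (g (fst (p_tile p)) (snd (p_tile p)) = T10 \<and> horizontal p) \<or>
     (g (fst (p_tile p)) (snd (p_tile p)) = T9 \<and> \<not> horizontal p)"

definition mosaic_gauss :: "nat \<Rightarrow> (nat \<Rightarrow> nat \<Rightarrow> tile) \<Rightarrow> passage list \<Rightarrow> gsym list" where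
  "mosaic_gauss n g ps =
     map (\<lambda>p. (fst (p_tile p) * n + snd (p_tile p), passes_over g p, crossing_positive g ps (p_tile p)))
       (filter (\<lambda>p. is_crossing (g (fst (p_tile p)) (snd (p_tile p)))) ps)"

definition represents :: "nat \<Rightarrow> nat \<Rightarrow> (nat \<Rightarrow> nat \<Rightarrow> tile) \<Rightarrow> (port \<Rightarrow> port) \<Rightarrow> gsym list \<Rightarrow> bool" where
  "represents m n g P K \<longleftrightarrow> virtual_mosaic m n g P \<and>
     (\<exists>ps. knot_traversal m n g P ps \<and> gauss_equiv (mosaic_gauss n g ps) K)"

end

theory Submission
  imports Defs
begin


lemma find_unique:
  assumes "x \<in> set xs" "P x" "\<And>y. y \<in> set xs \<Longrightarrow> P y \<Longrightarrow> y = x"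
  shows "find P xs = Some x"
  using assms
proof (induction xs)
  case Nil then show ?case by simp
next
  case (Cons a xs)
  show ?case
  proof (cases "P a")
    case True
    then have "a = x" using Cons.prems(3)[of a] by simp
    then show ?thesis using True by simp
  next
    case False
    then have "x \<noteq> a" using Cons.prems(2) by blast
    then have "x \<in> set xs" using Cons.prems(1) by simp
    moreover have "\<And>y. y \<in> set xs \<Longrightarrow> P y \<Longrightarrow> y = x" using Cons.prems(3) by simp
    ultimately have "find P xs = Some x" using Cons.IH Cons.prems(2) by blast
    then show ?thesis using False by simp
  qed
qed

lemma cyc_chain:
  assumes "ps \<noteq> []" "successively R ps" "R (last ps) (hd ps)"
  shows "\<forall>k < length ps. R (ps ! k) (ps ! ((k + 1) mod length ps))"
proof (intro allI impI)
  fix k assume k: "k < length ps"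
  show "R (ps ! k) (ps ! ((k + 1) mod length ps))"
  proof (cases "Suc k < length ps")
    case True
    then show ?thesis using successively_nth[OF assms(2) True] by simp
  next
    case False
    then have "k = length ps - 1" using k by simp
    then show ?thesis using assms(1,3) k by (simp add: last_conv_nth hd_conv_nth)
  qed
qed

lemma succ_concat:
  assumes "\<forall>x\<in>set xs. B x \<noteq> [] \<and> successively R (B x)"
    "successively (\<lambda>x y. R (last (B x)) (hd (B y))) xs"
  shows "successively R (concat (map B xs))"
  using assms
proof (induction xs)
  case Nil then show ?case by simp
next
  case (Cons x xs)
  show ?case
  proof (cases xs)
    case Nil then show ?thesis using Cons by simp
  next
    case (Cons y ys)
    have h: "hd (concat (map B xs)) = hd (B y)" using Cons \<open>\<forall>x\<in>set (x#xs). _\<close> by simp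
    have p1: "\<forall>x\<in>set xs. B x \<noteq> [] \<and> successively R (B x)" using Cons.prems(1) by simp
    have p2: "successively (\<lambda>x y. R (last (B x)) (hd (B y))) xs" using Cons.prems(2)
      by (cases xs) (auto simp: successively_Cons)
    have "successively R (concat (map B xs))" using Cons.IH[OF p1 p2] .
    then show ?thesis using Cons.prems h Cons
      by (simp add: successively_append_iff successively_Cons)
  qed
qed

lemma distinct_from_filters:
  assumes "\<forall>x\<in>set xs. distinct (filter (\<lambda>y. fst y = fst x) xs)"
  shows "distinct xs"
  using assms
proof (induction xs)
  case Nil then show ?case by simp
next
  case (Cons a xs)
  have "a \<notin> set xs"
  proof
    assume "a \<in> set xs"
    then have "a \<in> set (filter (\<lambda>y. fst y = fst a) xs)" by simp
    moreover have "distinct (filter (\<lambda>y. fst y = fst a) (a#xs))" using Cons.prems by simp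
    ultimately show False by simp
  qed
  moreover have "\<forall>x\<in>set xs. distinct (filter (\<lambda>y. fst y = fst x) xs)"
  proof
    fix x assume "x \<in> set xs"
    then have "distinct (filter (\<lambda>y. fst y = fst x) (a#xs))" using Cons.prems by simp
    then show "distinct (filter (\<lambda>y. fst y = fst x) xs)" by (simp split: if_splits)
  qed
  ultimately show ?case using Cons.IH by simp
qed

lemma vg_filter:
  assumes "valid_gauss K" "(c, ov, s) \<in> set K"
  shows "filter (\<lambda>x. fst x = c) K = [(c, True, s), (c, False, s)] \<or>
         filter (\<lambda>x. fst x = c) K = [(c, False, s), (c, True, s)]"
proof -
  have "c \<in> labels K" using assms(2) unfolding labels_def by force
  then obtain s0 where h: "filter (\<lambda>x. fst x = c) K = [(c, True, s0), (c, False, s0)] \<or>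
         filter (\<lambda>x. fst x = c) K = [(c, False, s0), (c, True, s0)]"
    using assms(1) unfolding valid_gauss_def by blast
  have m: "(c, ov, s) \<in> set (filter (\<lambda>x. fst x = c) K)" using assms(2) by simp
  have sub: "set (filter (\<lambda>x. fst x = c) K) \<subseteq> {(c,True,s0),(c,False,s0)}" using h by (elim disjE) simp_all
  have "(c,ov,s) \<in> {(c,True,s0),(c,False,s0)}" using m sub by blast
  then have "s = s0" by (metis Pair_inject insertE empty_iff)
  then show ?thesis using h by simp
qed

lemma vg_set:
  assumes "valid_gauss K" "(c, ov, s) \<in> set K"
  shows "{y \<in> set K. fst y = c} = {(c, True, s), (c, False, s)}"
proof -
  have "set (filter (\<lambda>x. fst x = c) K) = {(c, True, s), (c, False, s)}"
    using vg_filter[OF assms] by (elim disjE) (simp_all add: insert_commute)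
  then show ?thesis by simp
qed

lemma vg_sign:
  assumes "valid_gauss K" "(c, ov, s) \<in> set K" "(c, ov', s') \<in> set K"
  shows "s' = s"
proof -
  have "(c, ov', s') \<in> {y \<in> set K. fst y = c}" using assms(3) by simp
  then have "(c, ov', s') \<in> {(c, True, s), (c, False, s)}" using vg_set[OF assms(1,2)] by simp
  then show ?thesis by (metis Pair_inject insertE empty_iff)
qed

lemma vg_other:
  assumes "valid_gauss K" "(c, ov, s) \<in> set K"
  shows "(c, \<not> ov, s) \<in> set K"
proof -
  have "(c, \<not> ov, s) \<in> {(c, True, s), (c, False, s)}" by (cases ov) simp_all
  then have "(c, \<not> ov, s) \<in> {y \<in> set K. fst y = c}" using vg_set[OF assms] by simp
  then show ?thesis by simp
qed

lemma vg_distinct: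
  assumes "valid_gauss K" shows "distinct K"
proof (rule distinct_from_filters, intro ballI)
  fix x assume x: "x \<in> set K"
  obtain c ov s where X: "x = (c, ov, s)" by (metis prod_cases3)
  then show "distinct (filter (\<lambda>y. fst y = fst x) K)" using vg_filter[OF assms, of c ov s] x by fastforce
qed

lemma vg_len: assumes "valid_gauss K" "K \<noteq> []" shows "length K \<ge> 2"
proof -
  obtain c ov s where "(c,ov,s) \<in> set K" using assms(2) by (cases K) auto
  then have "length (filter (\<lambda>x. fst x = c) K) = 2" using vg_filter[OF assms(1)] by fastforce
  then show ?thesis by (metis length_filter_le)
qed


fun blk :: "gsym \<Rightarrow> passage list" where
  "blk (c, True, s) = [(0, 3*c, Sth, Est), (0, 3*c+1, Wst, Est), (0, 3*c+2, Wst, Sth)]"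
| "blk (c, False, s) = [(0, 3*c+1, if s then Sth else Nth, if s then Nth else Sth)]"

fun en :: "gsym \<Rightarrow> port" where
  "en (c, True, s) = (0, 3*c, Sth)"
| "en (c, False, s) = (0, 3*c+1, if s then Sth else Nth)"

fun ex :: "gsym \<Rightarrow> port" where
  "ex (c, True, s) = (0, 3*c+2, Sth)"
| "ex (c, False, s) = (0, 3*c+1, if s then Nth else Sth)"

definition nK :: "gsym list \<Rightarrow> nat" where "nK K = 3 * (Max (labels K) + 1)"

definition gK :: "gsym list \<Rightarrow> nat \<Rightarrow> nat \<Rightarrow> tile" where
  "gK K = (\<lambda>i j. if j div 3 \<in> labels K then
       (if j mod 3 = 0 then T2 else if j mod 3 = 1 then T10 else T1) else T0)"

definition idx :: "gsym list \<Rightarrow> gsym \<Rightarrow> nat" where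
  "idx K x = (THE k. k < length K \<and> K ! k = x)"
definition nx :: "gsym list \<Rightarrow> gsym \<Rightarrow> gsym" where
  "nx K x = K ! ((idx K x + 1) mod length K)"
definition pv :: "gsym list \<Rightarrow> gsym \<Rightarrow> gsym" where
  "pv K x = K ! ((idx K x + length K - 1) mod length K)"
definition sgnK :: "gsym list \<Rightarrow> nat \<Rightarrow> bool" where
  "sgnK K c = snd (snd (the (find (\<lambda>x. fst x = c) K)))"
definition symP :: "gsym list \<Rightarrow> gsym \<Rightarrow> bool \<Rightarrow> port" where
  "symP K x isex = (if isex then en (nx K x) else ex (pv K x))"

definition PK :: "gsym list \<Rightarrow> port \<Rightarrow> port" where
  "PK K = (\<lambda>(i, j, s). let c = j div 3; sg = sgnK K c; n = nK K in
    (case s of Wst \<Rightarrow> (0, n - 1, Est) | Est \<Rightarrow> (0, 0, Wst)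
     | Nth \<Rightarrow> if c \<notin> labels K then (0, j, Sth) else if j mod 3 = 0 then (0, j+2, Nth)
              else if j mod 3 = 2 then (0, j-2, Nth) else symP K (c, False, sg) sg
     | Sth \<Rightarrow> if c \<notin> labels K then (0, j, Nth) else if j mod 3 = 0 then symP K (c, True, sg) False
              else if j mod 3 = 2 then symP K (c, True, sg) True else symP K (c, False, sg) (\<not> sg)))"

lemma div3 [simp]: "(3*c) div 3 = (c::nat)" "(3*c+1) div 3 = c" "(3*c+2) div 3 = c"
  "(3*c) mod 3 = (0::nat)" "(3*c+1) mod 3 = 1" "(3*c+2) mod 3 = 2"
  by presburger+

lemma div3S [simp]: "Suc (3*c) div 3 = (c::nat)" "Suc (Suc (3*c)) div 3 = c"
  "Suc (3*c) mod 3 = 1" "Suc (Suc (3*c)) mod 3 = 2"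
  by presburger+

lemma finite_labels: "finite (labels K)" unfolding labels_def by simp

lemma lab_mem: "x \<in> set K \<Longrightarrow> fst x \<in> labels K" unfolding labels_def by simp

lemma lab_bound: "c \<in> labels K \<Longrightarrow> 3*c+2 < nK K"
proof -
  assume "c \<in> labels K"
  then have "c \<le> Max (labels K)" using finite_labels by simp
  then show ?thesis unfolding nK_def by simp
qed

lemma sgnK_eq:
  assumes "valid_gauss K" "(c, ov, s) \<in> set K"
  shows "sgnK K c = s"
proof -
  have "find (\<lambda>x. fst x = c) K \<noteq> None" using assms(2) by (auto simp: find_None_iff)
  then obtain y where y: "find (\<lambda>x. fst x = c) K = Some y" by auto
  then have "y \<in> set K" "fst y = c" by (auto simp: find_Some_iff)
  then have yy: "(c, fst (snd y), snd (snd y)) \<in> set K" by auto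
  have "snd (snd y) = s" using vg_sign[OF assms(1,2) yy] .
  then show ?thesis using y unfolding sgnK_def by simp
qed

locale vgK =
  fixes K :: "gsym list"
  assumes vg: "valid_gauss K" and ne: "K \<noteq> []"
begin

lemma dK: "distinct K" using vg_distinct[OF vg] .

lemma idx_nth: "k < length K \<Longrightarrow> idx K (K ! k) = k"
  unfolding idx_def using dK by (auto simp: nth_eq_iff_index_eq)

lemma idx_mem: "x \<in> set K \<Longrightarrow> idx K x < length K \<and> K ! idx K x = x"
  by (metis idx_nth in_set_conv_nth)

lemma nx_mem: "x \<in> set K \<Longrightarrow> nx K x \<in> set K"
  unfolding nx_def using ne by simp

lemma pv_mem: "x \<in> set K \<Longrightarrow> pv K x \<in> set K"
  unfolding pv_def using ne by simp

lemma pv_nx: "x \<in> set K \<Longrightarrow> pv K (nx K x) = x"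
proof -
  assume x: "x \<in> set K"
  let ?L = "length K" and ?i = "idx K x"
  have i: "?i < ?L" "K ! ?i = x" using idx_mem[OF x] by auto
  have "((?i + 1) mod ?L + ?L - 1) mod ?L = ?i"
  proof (cases "?i + 1 < ?L")
    case True then show ?thesis by simp
  next
    case False then have "?i + 1 = ?L" using i by simp
    then show ?thesis by simp
  qed
  then show ?thesis unfolding pv_def nx_def using idx_nth i ne by simp
qed

lemma nx_pv: "x \<in> set K \<Longrightarrow> nx K (pv K x) = x"
proof -
  assume x: "x \<in> set K"
  let ?L = "length K" and ?i = "idx K x"
  have i: "?i < ?L" "K ! ?i = x" using idx_mem[OF x] by auto
  have "((?i + ?L - 1) mod ?L + 1) mod ?L = ?i"
  proof (cases "?i = 0")
    case True then show ?thesis using i by (simp add: mod_if)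
  next
    case False then have "(?i + ?L - 1) mod ?L = ?i - 1"
      by (metis add.commute add_diff_assoc2 i(1) less_imp_diff_less mod_add_self1 mod_less not_gr_zero less_one leI)
    then show ?thesis using False i by simp
  qed
  then show ?thesis unfolding pv_def nx_def using idx_nth i ne by simp
qed

lemma succ_nx: "successively (\<lambda>x y. y = nx K x) K"
  unfolding successively_conv_nth nx_def using idx_nth by simp

lemma nx_last: "nx K (last K) = hd K"
  using ne idx_nth[of "length K - 1"] unfolding nx_def
  by (simp add: last_conv_nth hd_conv_nth)

lemma en_ne_ex: "x \<in> set K \<Longrightarrow> y \<in> set K \<Longrightarrow> en y \<noteq> ex x"
proof -
  assume x: "x \<in> set K" and y: "y \<in> set K"
  obtain c o1 s1 where X: "x = (c, o1, s1)" by (cases x) auto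
  obtain d o2 s2 where Y: "y = (d, o2, s2)" by (cases y) auto
  show ?thesis
  proof (cases "c = d")
    case True
    then have "s2 = s1" using vg_sign[OF vg] x y X Y by blast
    then show ?thesis using X Y True by (cases o1; cases o2) auto
  next
    case False
    then show ?thesis using X Y by (cases o1; cases o2) auto
  qed
qed


lemma x_cases: "x \<in> set K \<Longrightarrow> (\<And>c ov s. x = (c, ov, s) \<Longrightarrow> c \<in> labels K \<Longrightarrow> sgnK K c = s \<Longrightarrow>
   (c, True, s) \<in> set K \<Longrightarrow> (c, False, s) \<in> set K \<Longrightarrow> P) \<Longrightarrow> P"
proof -
  assume x: "x \<in> set K" and H: "\<And>c ov s. x = (c, ov, s) \<Longrightarrow> c \<in> labels K \<Longrightarrow> sgnK K c = s \<Longrightarrow>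
   (c, True, s) \<in> set K \<Longrightarrow> (c, False, s) \<in> set K \<Longrightarrow> P"
  obtain c ov s where X: "x = (c, ov, s)" by (metis prod_cases3)
  have xs: "(c, ov, s) \<in> set K" using x X by simp
  have o: "(c, \<not> ov, s) \<in> set K" using vg_other[OF vg xs] .
  have "(c, True, s) \<in> set K" "(c, False, s) \<in> set K" using xs o by (cases ov; simp)+
  then show P using H[OF X] lab_mem[OF x] X sgnK_eq[OF vg xs] by simp
qed

lemma x_data:
  assumes x: "x \<in> set K"
  obtains c ov s where "x = (c, ov, s)" "c \<in> labels K" "sgnK K c = s"
proof -
  obtain c ov s where X: "x = (c, ov, s)" by (metis prod_cases3)
  have xs: "(c, ov, s) \<in> set K" using x X by simp
  show ?thesis using that[OF X] lab_mem[OF x] X sgnK_eq[OF vg xs] by simp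
qed

lemma P_ex: assumes x: "x \<in> set K" shows "PK K (ex x) = en (nx K x)"
proof -
  obtain c ov s where "x = (c, ov, s)" "c \<in> labels K" "sgnK K c = s" using x_data[OF x] by blast
  then show ?thesis by (cases ov; cases s) (simp_all add: PK_def symP_def Let_def)
qed

lemma P_en: assumes x: "x \<in> set K" shows "PK K (en x) = ex (pv K x)"
proof -
  obtain c ov s where "x = (c, ov, s)" "c \<in> labels K" "sgnK K c = s" using x_data[OF x] by blast
  then show ?thesis by (cases ov; cases s) (simp_all add: PK_def symP_def Let_def)
qed

lemma en_bedges: assumes x: "x \<in> set K" shows "en x \<in> bedges 1 (nK K)"
proof -
  obtain c ov s where "x = (c, ov, s)" "c \<in> labels K" "sgnK K c = s" using x_data[OF x] by blast
  then show ?thesis by (cases ov; cases s) (auto simp: bedges_def dest: lab_bound)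
qed

lemma ex_bedges: assumes x: "x \<in> set K" shows "ex x \<in> bedges 1 (nK K)"
proof -
  obtain c ov s where "x = (c, ov, s)" "c \<in> labels K" "sgnK K c = s" using x_data[OF x] by blast
  then show ?thesis by (cases ov; cases s) (auto simp: bedges_def dest: lab_bound)
qed

lemma nK_pos: "0 < nK K" unfolding nK_def by simp

lemma VM: "virtual_mosaic 1 (nK K) (gK K) (PK K)"
  unfolding virtual_mosaic_def
proof (intro conjI)
  show "0 < (1::nat)" by simp
  show "0 < nK K" using nK_pos .
  show "\<forall>e \<in> bedges 1 (nK K). PK K e \<in> bedges 1 (nK K) \<and> PK K e \<noteq> e \<and> PK K (PK K e) = e"
  proof
  fix e assume e: "e \<in> bedges 1 (nK K)"
  let ?n = "nK K"
  show "PK K e \<in> bedges 1 ?n \<and> PK K e \<noteq> e \<and> PK K (PK K e) = e"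
  proof (cases "\<exists>x\<in>set K. e = en x \<or> e = ex x")
    case True
    then obtain x where x: "x \<in> set K" and ee: "e = en x \<or> e = ex x" by blast
    from ee show ?thesis
    proof
      assume E: "e = en x"
      show ?thesis using E P_en[OF x] ex_bedges[OF pv_mem[OF x]] P_ex[OF pv_mem[OF x]] nx_pv[OF x]
        en_ne_ex[OF pv_mem[OF x] x] by simp
    next
      assume E: "e = ex x"
      show ?thesis using E P_ex[OF x] en_bedges[OF nx_mem[OF x]] P_en[OF nx_mem[OF x]] pv_nx[OF x]
        en_ne_ex[OF x nx_mem[OF x]] by simp
    qed
  next
    case False
    then have nsym: "\<And>x. x \<in> set K \<Longrightarrow> e \<noteq> en x \<and> e \<noteq> ex x" by blast
    have n3: "?n mod 3 = 0" "?n \<ge> 3" unfolding nK_def by simp_all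
    from e consider (N) j where "e = (0, j, Nth)" "j < ?n" | (S) j where "e = (0, j, Sth)" "j < ?n"
      | (W) "e = (0, 0, Wst)" | (E) "e = (0, ?n - 1, Est)"
      unfolding bedges_def by auto
    then show ?thesis
    proof cases
      case W then show ?thesis using n3 by (simp add: PK_def bedges_def)
    next
      case E then show ?thesis using n3 by (simp add: PK_def bedges_def)
    next
      case (N j)
      obtain c r where j: "j = 3*c + r" "r < 3"
      proof -
        have "j = 3*(j div 3) + j mod 3" "j mod 3 < 3" by simp_all
        then show ?thesis using that by blast
      qed
      show ?thesis
      proof (cases "c \<in> labels K")
        case False then show ?thesis using N j by (simp add: PK_def bedges_def)
      next
        case True
        then obtain ov s where cs: "(c, ov, s) \<in> set K" unfolding labels_def by force
        have sg: "sgnK K c = s" using sgnK_eq[OF vg cs] .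
        have cF: "(c, False, s) \<in> set K" using cs vg_other[OF vg cs] by (cases ov) auto
        have b: "3*c+2 < ?n" using lab_bound[OF True] .
        consider "r = 0" | "r = 1" | "r = 2" using j by linarith
        then show ?thesis
        proof cases
          case 1 then show ?thesis using N j True b by (simp add: PK_def bedges_def)
        next
          case 2 then show ?thesis using N j nsym[OF cF] by (cases s) auto
        next
          case 3 then show ?thesis using N j True b by (simp add: PK_def bedges_def)
        qed
      qed
    next
      case (S j)
      obtain c r where j: "j = 3*c + r" "r < 3"
      proof -
        have "j = 3*(j div 3) + j mod 3" "j mod 3 < 3" by simp_all
        then show ?thesis using that by blast
      qed
      show ?thesis
      proof (cases "c \<in> labels K")
        case False then show ?thesis using S j by (simp add: PK_def bedges_def)
      next
        case True
        then obtain ov s where cs: "(c, ov, s) \<in> set K" unfolding labels_def by force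
        have cF: "(c, False, s) \<in> set K" "(c, True, s) \<in> set K" using cs vg_other[OF vg cs] by (cases ov; auto)+
        consider "r = 0" | "r = 1" | "r = 2" using j by linarith
        then show ?thesis
        proof cases
          case 1 then show ?thesis using S j nsym[OF cF(2)] by auto
        next
          case 2 then show ?thesis using S j nsym[OF cF(1)] by (cases s) auto
        next
          case 3 then show ?thesis using S j nsym[OF cF(2)] by auto
        qed
      qed
    qed
  qed
qed


qed
end



context vgK
begin

definition psK :: "passage list" where "psK = concat (map blk K)"

lemma blk_ne: "blk x \<noteq> []"
  by (cases x) (case_tac b; simp)

lemma blk_hd: "p_entry (hd (blk x)) = en x"
  by (cases x) (case_tac b; case_tac c; simp)

lemma blk_last: "p_exit (last (blk x)) = ex x"
  by (cases x) (case_tac b; case_tac c; simp)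

lemma link_ex: "x \<in> set K \<Longrightarrow> link 1 (nK K) (PK K) (ex x) = en (nx K x)"
proof -
  assume x: "x \<in> set K"
  obtain i j s where E: "ex x = (i, j, s)" by (metis prod_cases3)
  show ?thesis using ex_bedges[OF x] P_ex[OF x] E by simp
qed

lemma blk_succ: "x \<in> set K \<Longrightarrow>
   successively (\<lambda>p q. link 1 (nK K) (PK K) (p_exit p) = p_entry q) (blk x)"
proof -
  assume x: "x \<in> set K"
  obtain c ov s where X: "x = (c, ov, s)" "c \<in> labels K" using x_data[OF x] by blast
  have b: "3*c+2 < nK K" using lab_bound[OF X(2)] .
  show ?thesis using X b by (cases ov; cases s) (auto simp: bedges_def)
qed

lemma concat_hd_last: "(\<forall>x\<in>set xs. B x \<noteq> []) \<Longrightarrow> xs \<noteq> [] \<Longrightarrow>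
   last (concat (map B xs)) = last (B (last xs)) \<and> hd (concat (map B xs)) = hd (B (hd xs))"
  by (induction xs) auto

lemma ps_ne: "psK \<noteq> []"
  unfolding psK_def using ne blk_ne by (cases K) auto

lemma ps_link: "\<forall>k < length psK. link 1 (nK K) (PK K) (p_exit (psK ! k)) =
    p_entry (psK ! ((k + 1) mod length psK))"
proof (rule cyc_chain[OF ps_ne])
  let ?R = "\<lambda>p q. link 1 (nK K) (PK K) (p_exit p) = p_entry q"
  have "successively (\<lambda>x y. ?R (last (blk x)) (hd (blk y))) K"
  proof (rule successively_mono[OF succ_nx])
    fix x y assume "x \<in> set K" "y \<in> set K" "y = nx K x"
    then show "?R (last (blk x)) (hd (blk y))" using link_ex blk_hd blk_last by simp
  qed
  moreover have "\<forall>x\<in>set K. blk x \<noteq> [] \<and> successively ?R (blk x)" using blk_ne blk_succ by blast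
  ultimately show "successively ?R psK" unfolding psK_def using succ_concat by blast
  have "last psK = last (blk (last K))" "hd psK = hd (blk (hd K))"
    using concat_hd_last[of K blk] ne blk_ne unfolding psK_def by auto
  then show "?R (last psK) (hd psK)"
    using link_ex[OF last_in_set[OF ne]] blk_hd blk_last nx_last by simp
qed

fun skey :: "nat \<times> nat \<times> side set \<Rightarrow> nat \<times> bool" where
  "skey (i, j, st) = (j div 3, st \<noteq> {Nth, Sth})"

lemma distinct_concat_key:
  assumes "\<forall>x\<in>set xs. distinct (map h (B x)) \<and> (\<forall>q\<in>set (B x). k (h q) = key x)"
    "distinct (map key xs)"
  shows "distinct (map h (concat (map B xs)))"
  using assms
proof (induction xs)
  case Nil then show ?case by simp
next
  case (Cons x xs)
  have "set (map h (B x)) \<inter> set (map h (concat (map B xs))) = {}"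
  proof -
    { fix q q' assume q: "q \<in> set (B x)" and q': "q' \<in> set (concat (map B xs))" and eq: "h q = h q'"
      then obtain y where y: "y \<in> set xs" "q' \<in> set (B y)" by auto
      have "key x = key y" using Cons.prems(1) q y eq by (metis list.set_intros(1) list.set_intros(2))
      then have False using Cons.prems(2) y by (auto simp: image_iff) }
    then show ?thesis by fastforce
  qed
  then show ?case using Cons by simp
qed

lemma ps_distinct: "distinct (map p_strand psK)"
  unfolding psK_def
proof (rule distinct_concat_key[where k = skey and key = "\<lambda>x. (fst x, fst (snd x))"])
  show "\<forall>x\<in>set K. distinct (map p_strand (blk x)) \<and>
      (\<forall>q\<in>set (blk x). skey (p_strand q) = (fst x, fst (snd x)))"
  proof
    fix x assume "x \<in> set K"
    obtain c ov s where "x = (c, ov, s)" by (metis prod_cases3)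
    then show "distinct (map p_strand (blk x)) \<and>
      (\<forall>q\<in>set (blk x). skey (p_strand q) = (fst x, fst (snd x)))"
      by (cases ov; cases s) (auto simp: insert_commute)
  qed
  show "distinct (map (\<lambda>x. (fst x, fst (snd x))) K)"
  proof (subst distinct_map, intro conjI dK inj_onI)
    fix x y assume x: "x \<in> set K" and y: "y \<in> set K" and eq: "(fst x, fst (snd x)) = (fst y, fst (snd y))"
    obtain c ov s where X: "x = (c, ov, s)" by (metis prod_cases3)
    obtain d ov' s' where Y: "y = (d, ov', s')" by (metis prod_cases3)
    have "c = d" "ov = ov'" using eq X Y by auto
    moreover have "s' = s" using vg_sign[OF vg, of c ov s ov' s'] x y X Y \<open>c = d\<close> by simp
    ultimately show "x = y" using X Y by simp
  qed
qed

lemma ps_set: "y \<in> set psK \<longleftrightarrow> (\<exists>z\<in>set K. y \<in> set (blk z))"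
  unfolding psK_def by auto

lemma ps_strands: "set (map p_strand psK) = strands 1 (nK K) (gK K)"
proof
  show "set (map p_strand psK) \<subseteq> strands 1 (nK K) (gK K)"
  proof
    fix t assume "t \<in> set (map p_strand psK)"
    then obtain y z where yz: "z \<in> set K" "y \<in> set (blk z)" "t = p_strand y" using ps_set by auto
    obtain c ov s where X: "z = (c, ov, s)" "c \<in> labels K" using x_data[OF yz(1)] by blast
    have b: "3*c+2 < nK K" using lab_bound[OF X(2)] .
    have st: "\<And>j st. j < nK K \<Longrightarrow> st \<in> tile_strands (gK K 0 j) \<Longrightarrow> (0, j, st) \<in> strands 1 (nK K) (gK K)"
      by (auto simp: strands_def)
    have g: "gK K 0 (3*c) = T2" "gK K 0 (3*c+1) = T10" "gK K 0 (3*c+2) = T1" using X(2) by (simp_all add: gK_def)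
    show "t \<in> strands 1 (nK K) (gK K)"
    proof (cases ov)
      case True
      then have "y \<in> {(0, 3*c, Sth, Est), (0, 3*c+1, Wst, Est), (0, 3*c+2, Wst, Sth)}" using yz X by simp
      then show ?thesis
      proof (elim insertE emptyE)
        assume "y = (0, 3*c, Sth, Est)"
        then show ?thesis using st[of "3*c" "{Sth, Est}"] g b yz(3) by simp
      next
        assume "y = (0, 3*c+1, Wst, Est)"
        then show ?thesis using st[of "3*c+1" "{Wst, Est}"] g b yz(3) by simp
      next
        assume "y = (0, 3*c+2, Wst, Sth)"
        then show ?thesis using st[of "3*c+2" "{Wst, Sth}"] g b yz(3) by simp
      qed
    next
      case False
      then have "y = (0, 3*c+1, if s then Sth else Nth, if s then Nth else Sth)" using yz X by simp
      then have "t = (0, 3*c+1, {Nth, Sth})" using yz(3) by (cases s) (simp_all add: insert_commute)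
      then show ?thesis using st[of "3*c+1" "{Nth, Sth}"] g b by simp
    qed
  qed
  show "strands 1 (nK K) (gK K) \<subseteq> set (map p_strand psK)"
  proof
    fix t assume "t \<in> strands 1 (nK K) (gK K)"
    then obtain j st where t: "t = (0, j, st)" "j < nK K" "st \<in> tile_strands (gK K 0 j)"
      unfolding strands_def by auto
    obtain c r where j: "j = 3*c + r" "r < 3"
    proof -
      have "j = 3*(j div 3) + j mod 3" "j mod 3 < 3" by simp_all
      then show ?thesis using that by blast
    qed
    have cl: "c \<in> labels K"
    proof (rule ccontr)
      assume "c \<notin> labels K"
      then have "gK K 0 j = T0" using j unfolding gK_def by simp
      then show False using t by simp
    qed
    then obtain ov s where cs: "(c, ov, s) \<in> set K" unfolding labels_def by force
    have cF: "(c, False, s) \<in> set K" "(c, True, s) \<in> set K" using cs vg_other[OF vg cs] by (cases ov; auto)+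
    have mem: "\<And>y z. z \<in> set K \<Longrightarrow> y \<in> set (blk z) \<Longrightarrow> p_strand y \<in> set (map p_strand psK)"
    proof -
      fix y z assume "z \<in> set K" "y \<in> set (blk z)"
      then have "y \<in> set psK" using ps_set by blast
      then show "p_strand y \<in> set (map p_strand psK)" by simp
    qed
    consider "r = 0" | "r = 1" | "r = 2" using j by linarith
    then show "t \<in> set (map p_strand psK)"
    proof cases
      case 1
      then have "st = {Sth, Est}" using t j cl by (simp add: gK_def)
      then show ?thesis using mem[OF cF(2), of "(0, 3*c, Sth, Est)"] t j 1 by simp
    next
      case 2
      then have "st = {Wst, Est} \<or> st = {Nth, Sth}" using t j cl by (simp add: gK_def)
      then show ?thesis
      proof
        assume "st = {Wst, Est}"
        then show ?thesis using mem[OF cF(2), of "(0, 3*c+1, Wst, Est)"] t j 2 by simp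
      next
        assume st: "st = {Nth, Sth}"
        show ?thesis
        proof (cases s)
          case True
          then show ?thesis using mem[OF cF(1), of "(0, 3*c+1, Sth, Nth)"] t j 2 st by (simp add: insert_commute)
        next
          case False
          then show ?thesis using mem[OF cF(1), of "(0, 3*c+1, Nth, Sth)"] t j 2 st by simp
        qed
      qed
    next
      case 3
      then have "st = {Wst, Sth}" using t j cl by (simp add: gK_def)
      then show ?thesis using mem[OF cF(2), of "(0, 3*c+2, Wst, Sth)"] t j 3 by simp
    qed
  qed
qed

lemma KT: "knot_traversal 1 (nK K) (gK K) (PK K) psK"
  unfolding knot_traversal_def using ps_ne ps_distinct ps_strands ps_link by blast


lemma three_neq [simp]: "3*d \<noteq> Suc (3*(c::nat))" "Suc (Suc (3*d)) \<noteq> Suc (3*(c::nat))"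
  "Suc (3*d) \<noteq> 3*(c::nat)" "Suc (Suc (3*d)) \<noteq> 3*(c::nat)"
  by presburger+

lemma hfind: assumes cs: "(c, ov, s) \<in> set K"
  shows "find (\<lambda>q. p_tile q = (0, 3*c+1) \<and> horizontal q) psK = Some (0, 3*c+1, Wst, Est)"
proof (rule find_unique)
  have cT: "(c, True, s) \<in> set K" using cs vg_other[OF vg cs] by (cases ov) auto
  show "(0, 3*c+1, Wst, Est) \<in> set psK" using ps_set cT by force
  show "p_tile (0, 3*c+1, Wst, Est) = (0, 3*c+1) \<and> horizontal (0, 3*c+1, Wst, Est)"
    by (simp add: horizontal_def)
  fix y assume y: "y \<in> set psK" "p_tile y = (0, 3*c+1) \<and> horizontal y"
  then obtain z where z: "z \<in> set K" "y \<in> set (blk z)" using ps_set by auto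
  obtain d ov' s' where Z: "z = (d, ov', s')" by (metis prod_cases3)
  show "y = (0, 3*c+1, Wst, Est)" using y z Z by (cases ov'; cases s') (auto simp: horizontal_def)
qed

lemma vfind: assumes cs: "(c, ov, s) \<in> set K"
  shows "find (\<lambda>q. p_tile q = (0, 3*c+1) \<and> \<not> horizontal q) psK =
     Some (0, 3*c+1, if s then Sth else Nth, if s then Nth else Sth)"
proof (rule find_unique)
  have cF: "(c, False, s) \<in> set K" using cs vg_other[OF vg cs] by (cases ov) auto
  show "(0, 3*c+1, if s then Sth else Nth, if s then Nth else Sth) \<in> set psK"
    using ps_set cF by force
  show "p_tile (0, 3*c+1, if s then Sth else Nth, if s then Nth else Sth) = (0, 3*c+1) \<and>
     \<not> horizontal (0, 3*c+1, if s then Sth else Nth, if s then Nth else Sth)"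
    by (cases s) (simp_all add: horizontal_def)
  fix y assume y: "y \<in> set psK" "p_tile y = (0, 3*c+1) \<and> \<not> horizontal y"
  then obtain z where z: "z \<in> set K" "y \<in> set (blk z)" using ps_set by auto
  obtain d ov' s' where Z: "z = (d, ov', s')" by (metis prod_cases3)
  show "y = (0, 3*c+1, if s then Sth else Nth, if s then Nth else Sth)"
  proof (cases ov')
    case True then show ?thesis using y z Z by (auto simp: horizontal_def)
  next
    case False
    then have y': "y = (0, 3*d+1, if s' then Sth else Nth, if s' then Nth else Sth)" using z Z by simp
    then have "d = c" using y by simp
    then have "s' = s" using vg_sign[OF vg cs, of ov' s'] z Z by simp
    then show ?thesis using y' \<open>d = c\<close> by simp
  qed
qed

lemma cpos: assumes cs: "(c, ov, s) \<in> set K"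
  shows "crossing_positive (gK K) psK (0, 3*c+1) = s"
proof -
  have cl: "c \<in> labels K" using lab_mem[OF cs] by simp
  have "hdir psK (0, 3*c+1) = 1" unfolding hdir_def using hfind[OF cs] by simp
  moreover have "vdir psK (0, 3*c+1) = (if s then 1 else -1)" unfolding vdir_def using vfind[OF cs]
    by (cases s) simp_all
  moreover have "gK K 0 (3*c+1) = T10" using cl by (simp add: gK_def)
  ultimately show ?thesis unfolding crossing_positive_def by (cases s) simp_all
qed

lemma mg: "mosaic_gauss (nK K) (gK K) psK = map (\<lambda>(c, ov, s). (3*c+1, ov, s)) K"
proof -
  let ?crp = "\<lambda>p. is_crossing (gK K (fst (p_tile p)) (snd (p_tile p)))"
  define mid where "mid = (\<lambda>x::gsym. (0::nat, 3 * fst x + 1, if fst (snd x) then Wst else if snd (snd x) then Sth else Nth,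
      if fst (snd x) then Est else if snd (snd x) then Nth else Sth))"
  have f: "filter ?crp (blk x) = [mid x]" if x: "x \<in> set K" for x
  proof -
    obtain c ov s where X: "x = (c, ov, s)" "c \<in> labels K" using x_data[OF x] by blast
    show ?thesis using X by (cases ov; cases s) (simp_all add: gK_def is_crossing_def mid_def)
  qed
  have "filter ?crp psK = concat (map (\<lambda>x. filter ?crp (blk x)) K)"
    unfolding psK_def by (simp add: filter_concat o_def)
  also have "\<dots> = concat (map (\<lambda>x. [mid x]) K)" using f by (intro arg_cong[where f=concat] map_cong) simp_all
  also have "\<dots> = map mid K" by simp
  finally have fl: "filter ?crp psK = map mid K" .
  have e: "(fst (p_tile (mid x)) * nK K + snd (p_tile (mid x)), passes_over (gK K) (mid x),
        crossing_positive (gK K) psK (p_tile (mid x))) = (case x of (c, ov, s) \<Rightarrow> (3*c+1, ov, s))"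
    if x: "x \<in> set K" for x
  proof -
    obtain c ov s where X: "x = (c, ov, s)" "c \<in> labels K" using x_data[OF x] by blast
    have cs: "(c, ov, s) \<in> set K" using x X by simp
    have g: "gK K 0 (3*c+1) = T10" using X by (simp add: gK_def)
    show ?thesis using X cpos[OF cs] g
      by (cases ov; cases s) (simp_all add: mid_def passes_over_def horizontal_def)
  qed
  show ?thesis unfolding mosaic_gauss_def fl map_map o_def by (rule map_cong[OF refl e])
qed

end


lemma valid_rename:
  assumes vg: "valid_gauss K"
  shows "valid_gauss (map (\<lambda>(c, ov, s). (3*c+1, ov, s)) K)"
  unfolding valid_gauss_def
proof
  let ?F = "\<lambda>(c::nat, ov::bool, s::bool). (3*c+1, ov, s)"
  fix c' assume "c' \<in> labels (map ?F K)"
  then obtain x where x: "x \<in> set K" "c' = 3 * fst x + 1" unfolding labels_def by auto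
  obtain c ov s where X: "x = (c, ov, s)" by (metis prod_cases3)
  have xs: "(c, ov, s) \<in> set K" using x X by simp
  have f: "filter (\<lambda>y. fst y = c') (map ?F K) = map ?F (filter (\<lambda>y. fst y = c) K)"
    unfolding filter_map o_def using x X by (intro arg_cong[where f="map ?F"] filter_cong) auto
  show "\<exists>s. filter (\<lambda>y. fst y = c') (map ?F K) = [(c', True, s), (c', False, s)] \<or>
          filter (\<lambda>y. fst y = c') (map ?F K) = [(c', False, s), (c', True, s)]"
    using vg_filter[OF vg xs] f x X by auto
qed

lemma gequiv_rename:
  assumes vg: "valid_gauss K"
  shows "gauss_equiv (map (\<lambda>(c, ov, s). (3*c+1, ov, s)) K) K"
proof -
  have "gmove K (map (\<lambda>(c, ov, s). ((\<lambda>c::nat. 3*c+1) c, ov, s)) K)"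
    by (rule gmove.rename) (auto simp: inj_on_def)
  then have "gstep K (map (\<lambda>(c, ov, s). (3*c+1, ov, s)) K)"
    unfolding gstep_def using vg valid_rename[OF vg] by simp
  then show ?thesis unfolding gauss_equiv_def by (blast intro: equivclp_sym)
qed

theorem mainTheorem2:
  fixes K :: "gsym list"
  assumes "valid_gauss K"
  shows "\<exists>n > 0. \<exists>g P. represents 1 n g P K"
proof (cases "K = []")
  case True
  define P :: "port \<Rightarrow> port" where "P = (\<lambda>(i, j, s). case s of Nth \<Rightarrow> (0, 0, Sth) | Sth \<Rightarrow> (0, 0, Nth)
     | Wst \<Rightarrow> (0, 0, Est) | Est \<Rightarrow> (0, 0, Wst))"
  define g :: "nat \<Rightarrow> nat \<Rightarrow> tile" where "g = (\<lambda>i j. T6)"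
  have b: "bedges 1 1 = {(0, 0, Nth), (0, 0, Sth), (0, 0, Wst), (0, 0, Est)}"
    unfolding bedges_def by auto
  have vm: "virtual_mosaic 1 1 g P" unfolding virtual_mosaic_def b P_def by auto
  have st: "strands 1 1 g = {(0, 0, {Nth, Sth})}" unfolding strands_def g_def by auto
  have kt: "knot_traversal 1 1 g P [(0, 0, Sth, Nth)]"
    unfolding knot_traversal_def st using b by (auto simp: P_def insert_commute)
  have mg: "mosaic_gauss 1 g [(0, 0, Sth, Nth)] = []"
    unfolding mosaic_gauss_def g_def is_crossing_def by simp
  have "gauss_equiv [] K" using True unfolding gauss_equiv_def by simp
  then have "represents 1 1 g P K" unfolding represents_def using vm kt mg by metis
  then show ?thesis by blast
next
  case False
  interpret vgK K using assms False by unfold_locales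
  have "represents 1 (nK K) (gK K) (PK K) K"
    unfolding represents_def using VM KT mg gequiv_rename[OF assms] by metis
  then show ?thesis using nK_pos by blast
qed

end
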